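(* Let $R$ be a lattice diagram of a knot or link. (1) Suppose that two problem crossings of $R$ are adjacent. Then either the two problem crossings have the same crossing type and neither is a bad neighbor of the other, or they have opposite crossing types and each is a bad neighbor of the other. (2) Suppose that four crossings of $R$ are the vertices of a unit square of the $\mathbb{Z}^2$ lattice. If at least two of these four crossings are problem crossings whose two adjacent crossings among the four are among its bad neighbors, then all four crossings are problem crossings and the four crossings form a Celtic configuration. (3) If $R$ has a problem crossing with more than two bad neighbors that are problem crossings, then $R$ has a Celtic configuration.
   Context: A lattice diagram of a knot or link is a knot or link diagram (with over/under information at finitely many transverse double points, the crossings) contained in the $\mathbb{Z}^2$ lattice (vertices the integer points, edges the unit segments parallel to the axes) with all crossings at lattice vertices. At a crossing $c$, the $x$-strand (resp. $y$-strand) is the union of the two horizontal (resp. vertical) lattice edges of $R$ with endpoint $c$; $c$ is an $x$-crossing (resp. $y$-crossing) if the over-strand is the $x$-strand (resp. $y$-strand); this is its crossing type. The crossing graph of $R$ is the subgraph of the $\mathbb{Z}^2$ lattice with a vertex at each crossing of $R$ and an edge between any two crossings at lattice distance $1$; two crossings are adjacent if they are joined by an edge of this graph. Two neighbors $a,b$ of a vertex $v$ in this graph are nearby neighbors of $v$ if the edges $va$ and $vb$ are perpendicular, and opposing neighbors if they are parallel. A crossing $c$ is a problem crossing if it has a pair of nearby neighbors in the crossing graph that both have crossing type opposite to that of $c$; any crossing belonging to such a pair is called a bad neighbor of $c$ (a problem crossing may have more than two bad neighbors). A Celtic configuration is a set of four crossings at the four vertices of a unit square of the $\mathbb{Z}^2$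 lattice such that any two of them joined by a side of the square have opposite crossing types. *)

theory Defs
  imports Main
begin

type_synonym pt = "int \<times> int"

text \<open>A lattice diagram: a finite set of unit lattice edges, encoded by
  the horizontal edges (the edge from p to p + (1,0) is recorded as p) and
  the vertical edges (the edge from p to p + (0,1) is recorded as p), together
  with the over/under information at the crossings: xover c = True means that c
  is an x-crossing (the horizontal strand is the over-strand), False means
  that c is a y-crossing.  The value of xover away from crossings is irrelevant.\<close>
record diagram =
  hedges :: "pt set"
  vedges :: "pt set"
  xover :: "pt \<Rightarrow> bool"

definition ldeg :: "diagram \<Rightarrow> pt \<Rightarrow> nat" where
  "ldeg R p =
     (if p \<in> hedges R then 1 else 0) + (if (fst p - 1, snd p) \<in> hedges R then 1 else 0)
   + (if p \<in> vedges R then 1 else 0) + (if (fst p, snd p - 1) \<in> vedges R then 1 else 0)"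

text \<open>A lattice diagram of a knot or link: a nonempty finite union of lattice
  edges in which every lattice vertex has degree 0, 2 or 4.  Degree-2 vertices
  are ordinary points of the curve; degree-4 vertices are the transverse double
  points, i.e. the crossings (the strands go straight through).\<close>
definition lattice_diagram :: "diagram \<Rightarrow> bool" where
  "lattice_diagram R \<longleftrightarrow> finite (hedges R) \<and> finite (vedges R)
     \<and> hedges R \<union> vedges R \<noteq> {} \<and> (\<forall>p. ldeg R p \<in> {0, 2, 4})"

definition is_crossing :: "diagram \<Rightarrow> pt \<Rightarrow> bool" where
  "is_crossing R p \<longleftrightarrow> p \<in> hedges R \<and> (fst p - 1, snd p) \<in> hedges R
     \<and> p \<in> vedges R \<and> (fst p, snd p - 1) \<in> vedges R"

definition unit_dist :: "pt \<Rightarrow> pt \<Rightarrow> bool" where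
  "unit_dist a b \<longleftrightarrow> \<bar>fst a - fst b\<bar> + \<bar>snd a - snd b\<bar> = 1"

definition adjacent :: "diagram \<Rightarrow> pt \<Rightarrow> pt \<Rightarrow> bool" where
  "adjacent R a b \<longleftrightarrow> is_crossing R a \<and> is_crossing R b \<and> unit_dist a b"

definition nearby :: "diagram \<Rightarrow> pt \<Rightarrow> pt \<Rightarrow> pt \<Rightarrow> bool" where
  "nearby R v a b \<longleftrightarrow> adjacent R v a \<and> adjacent R v b
     \<and> (fst a - fst v) * (fst b - fst v) + (snd a - snd v) * (snd b - snd v) = 0"

definition problem_crossing :: "diagram \<Rightarrow> pt \<Rightarrow> bool" where
  "problem_crossing R c \<longleftrightarrow> is_crossing R c \<and>
     (\<exists>a b. nearby R c a b \<and> xover R a \<noteq> xover R c \<and> xover R b \<noteq> xover R c)"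

definition bad_neighbor :: "diagram \<Rightarrow> pt \<Rightarrow> pt \<Rightarrow> bool" where
  "bad_neighbor R c a \<longleftrightarrow> problem_crossing R c \<and>
     (\<exists>b. nearby R c a b \<and> xover R a \<noteq> xover R c \<and> xover R b \<noteq> xover R c)"

definition unit_square :: "pt \<Rightarrow> pt set" where
  "unit_square p = {p, (fst p + 1, snd p), (fst p + 1, snd p + 1), (fst p, snd p + 1)}"

definition celtic :: "diagram \<Rightarrow> pt \<Rightarrow> bool" where
  "celtic R p \<longleftrightarrow> (\<forall>q \<in> unit_square p. is_crossing R q) \<and>
     (\<forall>q \<in> unit_square p. \<forall>r \<in> unit_square p. unit_dist q r \<longrightarrow> xover R q \<noteq> xover R r)"

end

theory Submission
  imports Defs
begin

lemma unit_dist_iff: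
  "unit_dist (x,y) b \<longleftrightarrow> b = (x+1,y) \<or> b = (x-1,y) \<or> b = (x,y+1) \<or> b = (x,y-1)"
  by (cases b) (auto simp: unit_dist_def abs_if)

lemma celtic_iff:
  "celtic R (x,y) \<longleftrightarrow> is_crossing R (x,y) \<and> is_crossing R (x+1,y) \<and> is_crossing R (x+1,y+1)
     \<and> is_crossing R (x,y+1) \<and> xover R (x,y) \<noteq> xover R (x+1,y) \<and> xover R (x+1,y) \<noteq> xover R (x+1,y+1)
     \<and> xover R (x+1,y+1) \<noteq> xover R (x,y+1) \<and> xover R (x,y+1) \<noteq> xover R (x,y)"
  unfolding celtic_def unit_square_def unit_dist_def by auto

lemma celtic_iff2:
  "celtic R (x,y) \<longleftrightarrow> is_crossing R (x,y) \<and> is_crossing R (x+1,y) \<and> is_crossing R (x+1,y+1)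
     \<and> is_crossing R (x,y+1) \<and> xover R (x+1,y) = (\<not> xover R (x,y)) \<and> xover R (x+1,y+1) = xover R (x,y)
     \<and> xover R (x,y+1) = (\<not> xover R (x,y))"
  unfolding celtic_iff
  by (cases "xover R (x,y)"; cases "xover R (x+1,y)"; cases "xover R (x+1,y+1)"; cases "xover R (x,y+1)") simp_all

lemma neq_bool: "(a::bool) \<noteq> b \<Longrightarrow> a = (\<not> b)" by auto

lemma prob_intro:
  assumes "is_crossing R v" "is_crossing R a" "is_crossing R b" "unit_dist v a" "unit_dist v b"
    "(fst a - fst v) * (fst b - fst v) + (snd a - snd v) * (snd b - snd v) = 0"
    "xover R a \<noteq> xover R v" "xover R b \<noteq> xover R v"
  shows "problem_crossing R v"
  unfolding problem_crossing_def nearby_def adjacent_def using assms by blast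

lemma bool4:
  fixes a b c d :: bool
  assumes "q1 \<in> {A,B,C,D}" "q2 \<in> {A,B,C,D}" "q1 \<noteq> q2"
    "\<And>q. q \<in> {q1,q2} \<Longrightarrow> (q=A \<longrightarrow> b\<noteq>a \<and> d\<noteq>a) \<and> (q=B \<longrightarrow> a\<noteq>b \<and> c\<noteq>b)
       \<and> (q=C \<longrightarrow> b\<noteq>c \<and> d\<noteq>c) \<and> (q=D \<longrightarrow> a\<noteq>d \<and> c\<noteq>d)"
  shows "b = (\<not> a) \<and> c = a \<and> d = (\<not> a)"
  using assms by (cases a; cases b; cases c; cases d) auto

lemma celtic_prob:
  assumes "celtic R p" "q \<in> unit_square p"
  shows "problem_crossing R q"
proof -
  obtain x y where p: "p = (x,y)" by (cases p)
  have cc: "is_crossing R (x,y) \<and> is_crossing R (x+1,y) \<and> is_crossing R (x+1,y+1)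
     \<and> is_crossing R (x,y+1) \<and> xover R (x+1,y) = (\<not> xover R (x,y)) \<and> xover R (x+1,y+1) = xover R (x,y)
     \<and> xover R (x,y+1) = (\<not> xover R (x,y))"
    using assms(1) unfolding p celtic_iff2 .
  have "q = (x,y) \<or> q = (x+1,y) \<or> q = (x+1,y+1) \<or> q = (x,y+1)"
    using assms(2) unfolding p unit_square_def by auto
  then show ?thesis
  proof (elim disjE)
    assume q: "q = (x,y)"
    show ?thesis unfolding q
      apply (rule prob_intro[of R _ "(x+1,y)" "(x,y+1)"])
      using cc by (simp_all add: unit_dist_def)
  next
    assume q: "q = (x+1,y)"
    show ?thesis unfolding q
      apply (rule prob_intro[of R _ "(x,y)" "(x+1,y+1)"])
      using cc by (simp_all add: unit_dist_def)
  next
    assume q: "q = (x+1,y+1)"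
    show ?thesis unfolding q
      apply (rule prob_intro[of R _ "(x+1,y)" "(x,y+1)"])
      using cc by (simp_all add: unit_dist_def)
  next
    assume q: "q = (x,y+1)"
    show ?thesis unfolding q
      apply (rule prob_intro[of R _ "(x,y)" "(x+1,y+1)"])
      using cc by (simp_all add: unit_dist_def)
  qed
qed

lemma perp3:
  assumes "unit_dist a b" "unit_dist a e" "unit_dist a f"
    "(fst e - fst a) * (fst f - fst a) + (snd e - snd a) * (snd f - snd a) = 0"
  shows "(fst b - fst a) * (fst e - fst a) + (snd b - snd a) * (snd e - snd a) = 0
       \<or> (fst b - fst a) * (fst f - fst a) + (snd b - snd a) * (snd f - snd a) = 0"
proof -
  obtain x y where a: "a = (x,y)" by (cases a)
  from assms(1-3) have "b = (x+1,y) \<or> b = (x-1,y) \<or> b = (x,y+1) \<or> b = (x,y-1)"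
    "e = (x+1,y) \<or> e = (x-1,y) \<or> e = (x,y+1) \<or> e = (x,y-1)"
    "f = (x+1,y) \<or> f = (x-1,y) \<or> f = (x,y+1) \<or> f = (x,y-1)"
    unfolding a unit_dist_iff by auto
  then show ?thesis using assms(4) unfolding a by (elim disjE; simp)
qed

lemma L:
  assumes "s = 1 \<or> s = -1" "t = 1 \<or> t = -1"
    "is_crossing R (x,y)" "is_crossing R (x+s,y)" "is_crossing R (x,y+t)" "is_crossing R (x+s,y+t)"
    "xover R (x+s,y) = (\<not> xover R (x,y))" "xover R (x,y+t) = (\<not> xover R (x,y))"
    "xover R (x+s,y+t) = xover R (x,y)"
  shows "\<exists>p. celtic R p"
  using assms(1,2)
proof (elim disjE)
  assume "s = 1" "t = 1" thus ?thesis using assms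
    by (intro exI[of _ "(x,y)"]) (simp add: celtic_iff2)
next
  assume "s = 1" "t = -1" thus ?thesis using assms
    by (intro exI[of _ "(x,y-1)"]) (simp add: celtic_iff2)
next
  assume "s = -1" "t = 1" thus ?thesis using assms
    by (intro exI[of _ "(x-1,y)"]) (simp add: celtic_iff2)
next
  assume "s = -1" "t = -1" thus ?thesis using assms
    by (intro exI[of _ "(x-1,y-1)"]) (simp add: celtic_iff2)
qed

lemma bad_facts:
  assumes "bad_neighbor R c a"
  shows "is_crossing R a" "is_crossing R c" "xover R a \<noteq> xover R c" "unit_dist c a"
  using assms by (auto simp: bad_neighbor_def nearby_def adjacent_def)

lemma Kh:
  assumes "t = 1 \<or> t = -1" "bad_neighbor R (x,y) (x+1,y)" "bad_neighbor R (x,y) (x-1,y)"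
    "problem_crossing R (x,y+t)" "xover R (x,y+t) \<noteq> xover R (x,y)"
  shows "\<exists>p. celtic R p"
proof -
  let ?d = "(x,y+t)"
  obtain e f where nf: "nearby R ?d e f" "xover R e \<noteq> xover R ?d" "xover R f \<noteq> xover R ?d"
    using assms(4) unfolding problem_crossing_def by blast
  have ud: "unit_dist ?d (x,y)" using assms(1) by (auto simp: unit_dist_def)
  have "\<exists>g. unit_dist ?d g \<and> is_crossing R g \<and> xover R g \<noteq> xover R ?d \<and>
     (fst (x,y) - fst ?d) * (fst g - fst ?d) + (snd (x,y) - snd ?d) * (snd g - snd ?d) = 0"
  proof -
    have n2: "unit_dist ?d e" "unit_dist ?d f" "is_crossing R e" "is_crossing R f"
      "(fst e - fst ?d) * (fst f - fst ?d) + (snd e - snd ?d) * (snd f - snd ?d) = 0"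
      using nf(1) unfolding nearby_def adjacent_def by blast+
    show ?thesis using perp3[OF ud n2(1) n2(2) n2(5)] n2(1-4) nf(2,3) by blast
  qed
  then obtain g where g: "unit_dist ?d g" "is_crossing R g" "xover R g \<noteq> xover R ?d"
    "(fst (x,y) - fst ?d) * (fst g - fst ?d) + (snd (x,y) - snd ?d) * (snd g - snd ?d) = 0" by blast
  have "g = (x+1,y+t) \<or> g = (x + -1, y+t)" using g(1,4) assms(1) unfolding unit_dist_iff by auto
  then obtain s where s: "s = 1 \<or> s = -1" "g = (x+s,y+t)" by blast
  have hs: "bad_neighbor R (x,y) (x+s,y)" using s(1) assms(2,3) by auto
  show ?thesis
  proof (rule L[OF s(1) assms(1)])
    show "is_crossing R (x,y)" "is_crossing R (x+s,y)" using bad_facts[OF hs] by auto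
    show "is_crossing R (x,y+t)" using assms(4) by (simp add: problem_crossing_def)
    show "is_crossing R (x+s,y+t)" using g(2) s(2) by simp
    show "xover R (x+s,y) = (\<not> xover R (x,y))" by (rule neq_bool[OF bad_facts(3)[OF hs]])
    show "xover R (x,y+t) = (\<not> xover R (x,y))" by (rule neq_bool[OF assms(5)])
    have "xover R (x+s,y+t) \<noteq> xover R (x,y+t)" using g(3) s(2) by simp
    then show "xover R (x+s,y+t) = xover R (x,y)" using assms(5) by blast
  qed
qed

lemma Kv:
  assumes "t = 1 \<or> t = -1" "bad_neighbor R (x,y) (x,y+1)" "bad_neighbor R (x,y) (x,y-1)"
    "problem_crossing R (x+t,y)" "xover R (x+t,y) \<noteq> xover R (x,y)"
  shows "\<exists>p. celtic R p"
proof -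
  let ?d = "(x+t,y)"
  obtain e f where nf: "nearby R ?d e f" "xover R e \<noteq> xover R ?d" "xover R f \<noteq> xover R ?d"
    using assms(4) unfolding problem_crossing_def by blast
  have ud: "unit_dist ?d (x,y)" using assms(1) by (auto simp: unit_dist_def)
  have "\<exists>g. unit_dist ?d g \<and> is_crossing R g \<and> xover R g \<noteq> xover R ?d \<and>
     (fst (x,y) - fst ?d) * (fst g - fst ?d) + (snd (x,y) - snd ?d) * (snd g - snd ?d) = 0"
  proof -
    have n2: "unit_dist ?d e" "unit_dist ?d f" "is_crossing R e" "is_crossing R f"
      "(fst e - fst ?d) * (fst f - fst ?d) + (snd e - snd ?d) * (snd f - snd ?d) = 0"
      using nf(1) unfolding nearby_def adjacent_def by blast+
    show ?thesis using perp3[OF ud n2(1) n2(2) n2(5)] n2(1-4) nf(2,3) by blast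
  qed
  then obtain g where g: "unit_dist ?d g" "is_crossing R g" "xover R g \<noteq> xover R ?d"
    "(fst (x,y) - fst ?d) * (fst g - fst ?d) + (snd (x,y) - snd ?d) * (snd g - snd ?d) = 0" by blast
  have "g = (x+t,y+1) \<or> g = (x+t, y + -1)" using g(1,4) assms(1) unfolding unit_dist_iff by auto
  then obtain s where s: "s = 1 \<or> s = -1" "g = (x+t,y+s)" by blast
  have hs: "bad_neighbor R (x,y) (x,y+s)" using s(1) assms(2,3) by auto
  show ?thesis
  proof (rule L[OF assms(1) s(1)])
    show "is_crossing R (x,y)" "is_crossing R (x,y+s)" using bad_facts[OF hs] by auto
    show "is_crossing R (x+t,y)" using assms(4) by (simp add: problem_crossing_def)
    show "is_crossing R (x+t,y+s)" using g(2) s(2) by simp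
    show "xover R (x,y+s) = (\<not> xover R (x,y))" by (rule neq_bool[OF bad_facts(3)[OF hs]])
    show "xover R (x+t,y) = (\<not> xover R (x,y))" by (rule neq_bool[OF assms(5)])
    have "xover R (x+t,y+s) \<noteq> xover R (x+t,y)" using g(3) s(2) by simp
    then show "xover R (x+t,y+s) = xover R (x,y)" using assms(5) by blast
  qed
qed

lemma part1:
  assumes "adjacent R a b" "problem_crossing R a" "problem_crossing R b"
  shows "(xover R a = xover R b \<and> \<not> bad_neighbor R a b \<and> \<not> bad_neighbor R b a)
          \<or> (xover R a \<noteq> xover R b \<and> bad_neighbor R a b \<and> bad_neighbor R b a)"
proof (cases "xover R a = xover R b")
  case True thus ?thesis by (auto simp: bad_neighbor_def)
next
  case False
  have gen: "bad_neighbor R u v" if H: "adjacent R u v" "problem_crossing R u" "xover R u \<noteq> xover R v" for u v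
  proof -
    obtain e f where nf: "nearby R u e f" "xover R e \<noteq> xover R u" "xover R f \<noteq> xover R u"
      using H(2) unfolding problem_crossing_def by blast
    have "\<exists>g. adjacent R u g \<and> xover R g \<noteq> xover R u \<and>
      (fst v - fst u) * (fst g - fst u) + (snd v - snd u) * (snd g - snd u) = 0"
    proof -
      have n2: "unit_dist u e" "unit_dist u f" "adjacent R u e" "adjacent R u f"
        "(fst e - fst u) * (fst f - fst u) + (snd e - snd u) * (snd f - snd u) = 0"
        using nf(1) unfolding nearby_def adjacent_def by blast+
      have uv: "unit_dist u v" using H(1) unfolding adjacent_def by blast
      show ?thesis using perp3[OF uv n2(1) n2(2) n2(5)] n2(3,4) nf(2,3) by blast
    qed
    then obtain g where g: "adjacent R u g" "xover R g \<noteq> xover R u"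
      "(fst v - fst u) * (fst g - fst u) + (snd v - snd u) * (snd g - snd u) = 0" by blast
    show ?thesis unfolding bad_neighbor_def nearby_def using H g by blast
  qed
  have "adjacent R b a" using assms(1) by (auto simp: adjacent_def unit_dist_def)
  thus ?thesis using gen assms False by metis
qed

lemma three_of_four:
  assumes "card S > 2" "S \<subseteq> {A,B,C,D}"
  shows "\<exists>a b d. a \<in> S \<and> b \<in> S \<and> d \<in> S \<and> a \<noteq> b \<and> a \<noteq> d \<and> b \<noteq> d"
proof -
  have "finite S" using assms by (metis card.infinite not_less_zero)
  from assms(1) obtain T where "T \<subseteq> S" "card T = 3"
    by (metis obtain_subset_with_card_n less_imp_le_nat Suc_leI numeral_3_eq_3 numeral_2_eq_2)
  then show ?thesis by (auto simp: card_Suc_eq numeral_3_eq_3)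
qed

lemma pick3:
  assumes "a \<in> S" "b \<in> S" "d \<in> S" "a \<noteq> b" "a \<noteq> d" "b \<noteq> d"
    "a \<in> {E,W,N,So}" "b \<in> {E,W,N,So}" "d \<in> {E,W,N,So}"
  shows "(E \<in> S \<and> W \<in> S \<and> (N \<in> S \<or> So \<in> S)) \<or> (N \<in> S \<and> So \<in> S \<and> (E \<in> S \<or> W \<in> S))"
  using assms by auto

theorem lemma3p6:
  assumes "lattice_diagram R"
  shows "(\<forall>a b. adjacent R a b \<and> problem_crossing R a \<and> problem_crossing R b \<longrightarrow>
            (xover R a = xover R b \<and> \<not> bad_neighbor R a b \<and> \<not> bad_neighbor R b a)
          \<or> (xover R a \<noteq> xover R b \<and> bad_neighbor R a b \<and> bad_neighbor R b a))
       \<and> (\<forall>p. (\<forall>q \<in> unit_square p. is_crossing R q) \<and>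
              card {q \<in> unit_square p. problem_crossing R q \<and>
                       (\<forall>r \<in> unit_square p. unit_dist q r \<longrightarrow> bad_neighbor R q r)} \<ge> 2
            \<longrightarrow> (\<forall>q \<in> unit_square p. problem_crossing R q) \<and> celtic R p)
       \<and> ((\<exists>c. problem_crossing R c \<and>
               card {a. bad_neighbor R c a \<and> problem_crossing R a} > 2)
            \<longrightarrow> (\<exists>p. celtic R p))"
proof (intro conjI allI impI)
  fix a b assume "adjacent R a b \<and> problem_crossing R a \<and> problem_crossing R b"
  thus "(xover R a = xover R b \<and> \<not> bad_neighbor R a b \<and> \<not> bad_neighbor R b a)
          \<or> (xover R a \<noteq> xover R b \<and> bad_neighbor R a b \<and> bad_neighbor R b a)"
    using part1 by blast
next
  fix p assume h: "(\<forall>q \<in> unit_square p. is_crossing R q) \<and>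
              card {q \<in> unit_square p. problem_crossing R q \<and>
                       (\<forall>r \<in> unit_square p. unit_dist q r \<longrightarrow> bad_neighbor R q r)} \<ge> 2"
  obtain x y where p: "p = (x,y)" by (cases p)
  let ?S = "{q \<in> unit_square p. problem_crossing R q \<and>
                       (\<forall>r \<in> unit_square p. unit_dist q r \<longrightarrow> bad_neighbor R q r)}"
  have c1: "\<not> card ?S \<le> Suc 0" using h by simp
  have fin: "finite ?S" using c1 card.infinite by force
  obtain q1 q2 where q: "q1 \<in> ?S" "q2 \<in> ?S" "q1 \<noteq> q2"
    using c1 unfolding card_le_Suc0_iff_eq[OF fin] by blast
  have ty: "\<forall>r \<in> unit_square p. unit_dist q r \<longrightarrow> xover R r \<noteq> xover R q" if "q \<in> ?S" for q
    using that bad_facts(3) by blast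
  have cr: "is_crossing R (x,y)" "is_crossing R (x+1,y)" "is_crossing R (x+1,y+1)" "is_crossing R (x,y+1)"
    using h unfolding p unit_square_def by auto
  have sq: "q1 \<in> unit_square p" "q2 \<in> unit_square p" using q by auto
  have cond: "(q=(x,y) \<longrightarrow> xover R (x+1,y) \<noteq> xover R (x,y) \<and> xover R (x,y+1) \<noteq> xover R (x,y))
    \<and> (q=(x+1,y) \<longrightarrow> xover R (x,y) \<noteq> xover R (x+1,y) \<and> xover R (x+1,y+1) \<noteq> xover R (x+1,y))
    \<and> (q=(x+1,y+1) \<longrightarrow> xover R (x+1,y) \<noteq> xover R (x+1,y+1) \<and> xover R (x,y+1) \<noteq> xover R (x+1,y+1))
    \<and> (q=(x,y+1) \<longrightarrow> xover R (x,y) \<noteq> xover R (x,y+1) \<and> xover R (x+1,y+1) \<noteq> xover R (x,y+1))"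
    if "q \<in> ?S" for q
    using ty[OF that] unfolding p by (intro conjI impI; simp add: unit_square_def unit_dist_def)
  have b4: "xover R (x+1,y) = (\<not> xover R (x,y)) \<and> xover R (x+1,y+1) = xover R (x,y)
      \<and> xover R (x,y+1) = (\<not> xover R (x,y))"
    apply (rule bool4[of q1 "(x,y)" "(x+1,y)" "(x+1,y+1)" "(x,y+1)" q2])
    subgoal using sq unfolding p unit_square_def by simp
    subgoal using sq unfolding p unit_square_def by simp
    subgoal using q(3) .
    subgoal for q using cond q(1,2) by blast
    done
  show cel: "celtic R p"
    unfolding p celtic_iff2 using cr b4 by simp
  show "\<forall>q \<in> unit_square p. problem_crossing R q"
    using celtic_prob[OF cel] by blast
next
  assume "\<exists>c. problem_crossing R c \<and> card {a. bad_neighbor R c a \<and> problem_crossing R a} > 2"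
  then obtain c where c: "card {a. bad_neighbor R c a \<and> problem_crossing R a} > 2" by blast
  obtain x y where cx: "c = (x,y)" by (cases c)
  let ?S = "{a. bad_neighbor R c a \<and> problem_crossing R a}"
  have "?S \<subseteq> {(x+1,y),(x-1,y),(x,y+1),(x,y-1)}"
  proof
    fix a assume "a \<in> ?S"
    then have "unit_dist (x,y) a" using bad_facts(4)[of R "(x,y)" a] cx by simp
    thus "a \<in> {(x+1,y),(x-1,y),(x,y+1),(x,y-1)}" unfolding unit_dist_iff by auto
  qed
  then obtain a b d where abd: "a \<in> ?S" "b \<in> ?S" "d \<in> ?S" "a \<noteq> b" "a \<noteq> d" "b \<noteq> d"
    and sub: "?S \<subseteq> {(x+1,y),(x-1,y),(x,y+1),(x,y-1)}"
    using three_of_four[OF c] by blast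
  have "((x+1,y) \<in> ?S \<and> (x-1,y) \<in> ?S \<and> ((x,y+1) \<in> ?S \<or> (x,y-1) \<in> ?S))
       \<or> ((x,y+1) \<in> ?S \<and> (x,y-1) \<in> ?S \<and> ((x+1,y) \<in> ?S \<or> (x-1,y) \<in> ?S))"
    apply (rule pick3[OF abd])
    using abd(1-3) sub by blast+
  then show "\<exists>p. celtic R p"
  proof (elim disjE conjE)
    assume h: "(x+1,y) \<in> ?S" "(x-1,y) \<in> ?S" "(x,y+1) \<in> ?S"
    show ?thesis apply (rule Kh[of 1 R x y]) using h bad_facts(3) unfolding cx by auto
  next
    assume h: "(x+1,y) \<in> ?S" "(x-1,y) \<in> ?S" "(x,y-1) \<in> ?S"
    show ?thesis apply (rule Kh[of "-1" R x y]) using h bad_facts(3) unfolding cx by auto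
  next
    assume h: "(x,y+1) \<in> ?S" "(x,y-1) \<in> ?S" "(x+1,y) \<in> ?S"
    show ?thesis apply (rule Kv[of 1 R x y]) using h bad_facts(3) unfolding cx by auto
  next
    assume h: "(x,y+1) \<in> ?S" "(x,y-1) \<in> ?S" "(x-1,y) \<in> ?S"
    show ?thesis apply (rule Kv[of "-1" R x y]) using h bad_facts(3) unfolding cx by auto
  qed
qed

end
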